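(* For any full-rank lattice $\mathcal{L} \subset \mathbb{R}^n$, any $s > n/2$ and $q > 0$, \[ \zeta(\mathcal{L}, s+1; q) \geq \frac{s - n/2}{qs} \cdot \zeta(\mathcal{L}, s; q). \]
   Context: For $q>0$ and $s>n/2$, $\zeta(\mathcal{L}, s; q) := \sum_{\vec{y} \in \mathcal{L}} (\|\vec{y}\|^2 + q)^{-s}$, the sum including $\vec y=\vec 0$. *)

theory Defs
  imports "HOL-Analysis.Analysis"
begin

definition lattice_of :: "real^'n^'n \<Rightarrow> (real^'n) set" where
  "lattice_of B = {B *v (\<chi> i. of_int (k $ i)) | k :: int^'n. True}"

definition full_rank_lattice :: "(real^'n) set \<Rightarrow> bool" where
  "full_rank_lattice L \<longleftrightarrow> (\<exists>B. invertible B \<and> L = lattice_of B)"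

text \<open>Epstein-type zeta function, sum over all lattice points including 0.\<close>
definition lattice_zeta :: "(real^'n) set \<Rightarrow> real \<Rightarrow> real \<Rightarrow> real" where
  "lattice_zeta L s q = (\<Sum>\<^sub>\<infinity>y\<in>L. ((norm y)\<^sup>2 + q) powr (- s))"

end

theory Submission
  imports Defs "HOL-Probability.Distributions"
begin

lemma gauss1_nn: "(\<integral>\<^sup>+x. ennreal (exp (- x\<^sup>2)) \<partial>lborel) = ennreal (sqrt pi)"
proof -
  have "has_bochner_integral lborel (\<lambda>x::real. exp (- x\<^sup>2)) (2 *\<^sub>R (sqrt pi / 2))"
    by (rule has_bochner_integral_even_function[OF gaussian_moment_0]) simp
  then have "has_bochner_integral lborel (\<lambda>x::real. exp (- x\<^sup>2)) (sqrt pi)" by simp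
  then show ?thesis
    by (subst nn_integral_eq_integrable) (auto simp: has_bochner_integral_iff)
qed

definition gC :: "'a::euclidean_space itself \<Rightarrow> ennreal" where
  "gC _ = (\<integral>\<^sup>+x. ennreal (exp (- (norm (x::'a))\<^sup>2)) \<partial>lborel)"

lemma gC_eq: "gC TYPE('a::euclidean_space) = ennreal (sqrt pi ^ DIM('a))"
proof -
  have "(\<integral>\<^sup>+x. ennreal (exp (- (norm (x::'a))\<^sup>2)) \<partial>lborel)
      = (\<integral>\<^sup>+x. (\<Prod>b\<in>Basis. exp (- ((x::'a) \<bullet> b)\<^sup>2)) \<partial>lborel)"
  proof (rule nn_integral_cong)
    fix x :: 'a
    have "(norm x)\<^sup>2 = (\<Sum>b\<in>Basis. (x \<bullet> b)\<^sup>2)"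
      by (simp add: norm_eq_sqrt_inner euclidean_inner[of x x] power2_eq_square sum_nonneg)
    then show "ennreal (exp (- (norm x)\<^sup>2)) = ennreal (\<Prod>b\<in>Basis. exp (- (x \<bullet> b)\<^sup>2))"
      by (simp add: exp_sum[symmetric] sum_negf)
  qed
  also have "\<dots> = (\<Prod>b\<in>(Basis::'a set). (\<integral>\<^sup>+x. ennreal (exp (- x\<^sup>2)) \<partial>lborel))"
    using nn_integral_lborel_prod[of "\<lambda>b x. exp (- x\<^sup>2)"]
    by (simp add: prod_ennreal)
  also have "\<dots> = ennreal (sqrt pi ^ DIM('a))"
    by (simp add: gauss1_nn prod_ennreal ennreal_power)
  finally show ?thesis unfolding gC_def .
qed

lemma gauss_shift:
  fixes c :: "'a::euclidean_space" and a :: real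
  assumes a: "a > 0"
  shows "(\<integral>\<^sup>+x. ennreal (exp (- a * (norm (x - c))\<^sup>2)) \<partial>lborel) = ennreal (sqrt (pi / a) ^ DIM('a))"
proof -
  define k where "k = 1 / sqrt a"
  have k: "k > 0" using a by (simp add: k_def)
  have "(\<integral>\<^sup>+x. ennreal (exp (- a * (norm (x - c))\<^sup>2)) \<partial>lborel)
     = (\<integral>\<^sup>+x. ennreal (exp (- a * (norm (x - c))\<^sup>2)) \<partial>density (distr lborel borel (\<lambda>x. c + k *\<^sub>R x)) (\<lambda>_. \<bar>k\<bar>^DIM('a)))"
    using lborel_affine[of k c] k by simp
  also have "\<dots> = (\<integral>\<^sup>+x. ennreal (\<bar>k\<bar>^DIM('a)) * ennreal (exp (- a * (norm (c + k *\<^sub>R x - c))\<^sup>2)) \<partial>lborel)"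
    by (subst nn_integral_density) (auto simp: nn_integral_distr)
  also have "\<dots> = (\<integral>\<^sup>+x. ennreal (k^DIM('a)) * ennreal (exp (- (norm (x::'a))\<^sup>2)) \<partial>lborel)"
  proof (rule nn_integral_cong)
    fix x :: 'a
    have "a * (norm (c + k *\<^sub>R x - c))\<^sup>2 = (norm x)\<^sup>2"
      using a k by (simp add: k_def power_mult_distrib power_divide)
    then show "ennreal (\<bar>k\<bar>^DIM('a)) * ennreal (exp (- a * (norm (c + k *\<^sub>R x - c))\<^sup>2)) = ennreal (k^DIM('a)) * ennreal (exp (- (norm x)\<^sup>2))"
      using k by simp
  qed
  also have "\<dots> = ennreal (k^DIM('a)) * gC TYPE('a)"
    unfolding gC_def by (rule nn_integral_cmult) simp
  also have "\<dots> = ennreal (sqrt (pi / a) ^ DIM('a))"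
    using k a by (simp add: gC_eq ennreal_mult[symmetric] power_mult_distrib[symmetric] k_def real_sqrt_divide)
  finally show ?thesis .
qed

lemma sq_complete_real:
  fixes a b u v z :: real
  assumes "a + b > 0"
  shows "a * (z - 2 * v + u) + b * u = (a + b) * (u - 2 * (a / (a + b)) * v + (a / (a + b))\<^sup>2 * z) + (a * b / (a + b)) * z"
proof -
  have ne: "a + b \<noteq> 0" using assms by simp
  have q: "(a + b) * (a / (a + b))\<^sup>2 = a\<^sup>2 / (a + b)"
    using ne by (simp add: power_divide power2_eq_square)
  have "(a + b) * (u - 2 * (a / (a + b)) * v + (a / (a + b))\<^sup>2 * z) = (a + b) * u - 2 * ((a + b) * (a / (a + b))) * v + ((a + b) * (a / (a + b))\<^sup>2) * z"
    by (simp add: algebra_simps)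
  also have "\<dots> = (a + b) * u - 2 * a * v + a\<^sup>2 / (a + b) * z"
    unfolding q using ne by simp
  moreover have "a\<^sup>2 / (a + b) * z + (a * b / (a + b)) * z = a * z"
  proof -
    have h1: "a * (a + b) / (a + b) = a\<^sup>2 / (a + b) + a * b / (a + b)"
      by (simp add: distrib_left add_divide_distrib power2_eq_square)
    have h2: "a * (a + b) / (a + b) = a" using ne by simp
    show ?thesis using h1 h2 by (metis distrib_right)
  qed
  ultimately show ?thesis by (simp add: algebra_simps)
qed

lemma sq_complete:
  fixes y w :: "'a::real_inner" and a b :: real
  assumes "a > 0" "b > 0"
  shows "a * (norm (y - w))\<^sup>2 + b * (norm w)\<^sup>2
       = (a + b) * (norm (w - (a / (a + b)) *\<^sub>R y))\<^sup>2 + (a * b / (a + b)) * (norm y)\<^sup>2"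
proof -
  have ab: "a + b > 0" using assms by simp
  have e1: "(norm (y - w))\<^sup>2 = y \<bullet> y - 2 * (w \<bullet> y) + w \<bullet> w"
    unfolding power2_norm_eq_inner by (simp add: inner_diff_left inner_diff_right inner_commute)
  have e2: "(norm (w - (a / (a + b)) *\<^sub>R y))\<^sup>2 = w \<bullet> w - 2 * (a / (a + b)) * (w \<bullet> y) + (a / (a + b))\<^sup>2 * (y \<bullet> y)"
    unfolding power2_norm_eq_inner by (simp add: inner_diff_left inner_diff_right inner_commute power2_eq_square)
  have e3: "(norm w)\<^sup>2 = w \<bullet> w" "(norm y)\<^sup>2 = y \<bullet> y" by (simp_all add: power2_norm_eq_inner)
  show ?thesis
    unfolding e1 e2 e3 using sq_complete_real[OF ab] by simp
qed

lemma gauss_conv: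
  fixes y :: "'a::euclidean_space" and a b :: real
  assumes a: "a > 0" and b: "b > 0"
  shows "(\<integral>\<^sup>+w. ennreal (exp (- a * (norm (y - w))\<^sup>2)) * ennreal (exp (- b * (norm w)\<^sup>2)) \<partial>lborel)
      = ennreal (exp (- (a * b / (a + b)) * (norm y)\<^sup>2)) * ennreal (sqrt (pi / (a + b)) ^ DIM('a))"
proof -
  have "(\<integral>\<^sup>+w. ennreal (exp (- a * (norm (y - w))\<^sup>2)) * ennreal (exp (- b * (norm w)\<^sup>2)) \<partial>lborel)
     = (\<integral>\<^sup>+w. ennreal (exp (- (a * b / (a + b)) * (norm y)\<^sup>2)) * ennreal (exp (- (a + b) * (norm (w - (a / (a + b)) *\<^sub>R y))\<^sup>2)) \<partial>lborel)"
  proof (rule nn_integral_cong)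
    fix w :: 'a
    have "exp (- a * (norm (y - w))\<^sup>2) * exp (- b * (norm w)\<^sup>2) = exp (- (a * (norm (y - w))\<^sup>2 + b * (norm w)\<^sup>2))"
      by (simp add: exp_add[symmetric])
    also have "\<dots> = exp (- (a * b / (a + b)) * (norm y)\<^sup>2) * exp (- (a + b) * (norm (w - (a / (a + b)) *\<^sub>R y))\<^sup>2)"
      unfolding sq_complete[OF a b] by (simp add: exp_add[symmetric] algebra_simps)
    finally show "ennreal (exp (- a * (norm (y - w))\<^sup>2)) * ennreal (exp (- b * (norm w)\<^sup>2)) = ennreal (exp (- (a * b / (a + b)) * (norm y)\<^sup>2)) * ennreal (exp (- (a + b) * (norm (w - (a / (a + b)) *\<^sub>R y))\<^sup>2))"
      by (simp add: ennreal_mult[symmetric])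
  qed
  also have "\<dots> = ennreal (exp (- (a * b / (a + b)) * (norm y)\<^sup>2)) * (\<integral>\<^sup>+w. ennreal (exp (- (a + b) * (norm (w - (a / (a + b)) *\<^sub>R y))\<^sup>2)) \<partial>lborel)"
    by (rule nn_integral_cmult) simp
  also have "\<dots> = ennreal (exp (- (a * b / (a + b)) * (norm y)\<^sup>2)) * ennreal (sqrt (pi / (a + b)) ^ DIM('a))"
    using a b by (subst gauss_shift) auto
  finally show ?thesis .
qed

lemma lsum_meas:
  fixes f :: "'i \<Rightarrow> 'b \<Rightarrow> ennreal"
  assumes "countable I" and meas: "\<And>i. i \<in> I \<Longrightarrow> f i \<in> borel_measurable M"
  shows "(\<lambda>x. \<integral>\<^sup>+i. f i x \<partial>count_space I) \<in> borel_measurable M"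
proof cases
  assume "finite I" then show ?thesis
    using meas by (simp add: nn_integral_count_space_finite)
next
  assume inf: "infinite I"
  then have [simp]: "I \<noteq> {}" by auto
  note * = bij_betw_from_nat_into[OF \<open>countable I\<close> inf]
  have eq: "(\<lambda>x. \<integral>\<^sup>+i. f i x \<partial>count_space I) = (\<lambda>x. \<Sum>n. f (from_nat_into I n) x)"
    by (simp add: nn_integral_bij_count_space[symmetric, OF *] nn_integral_count_space_nat)
  have m: "\<And>n. f (from_nat_into I n) \<in> borel_measurable M"
    using meas from_nat_into[OF \<open>I \<noteq> {}\<close>] by blast
  show ?thesis unfolding eq by (rule borel_measurable_suminf_order[OF m])
qed

locale lat =
  fixes L :: "'a::euclidean_space set" and D :: "'a set"
  assumes cL: "countable L"
    and addL: "\<And>y z. y \<in> L \<Longrightarrow> z \<in> L \<Longrightarrow> y + z \<in> L"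
    and negL: "\<And>y. y \<in> L \<Longrightarrow> - y \<in> L"
    and D_meas: "D \<in> sets borel"
    and tile: "\<And>x. \<exists>!z. z \<in> L \<and> x - z \<in> D"
begin

lemma ind_sum_one: "(\<integral>\<^sup>+z. indicator D (x - z) \<partial>count_space L) = 1"
proof -
  have "of_bool (\<exists>y\<in>L. x - y \<in> D) = (\<integral>\<^sup>+y. of_bool (x - y \<in> D) \<partial>count_space L)"
    by (rule of_bool_Bex_eq_nn_integral) (use tile in blast)
  moreover have "\<exists>y\<in>L. x - y \<in> D" using tile by blast
  ultimately show ?thesis by (simp add: indicator_def)
qed

lemma shift_lborel:
  fixes g :: "'a \<Rightarrow> ennreal"
  assumes [measurable]: "g \<in> borel_measurable borel"
  shows "(\<integral>\<^sup>+x. g x \<partial>lborel) = (\<integral>\<^sup>+u. g (u + c) \<partial>lborel)"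
proof -
  have "(\<integral>\<^sup>+x. g x \<partial>lborel) = (\<integral>\<^sup>+x. g x \<partial>distr lborel borel ((+) c))"
    by (simp add: lborel_distr_plus)
  also have "\<dots> = (\<integral>\<^sup>+u. g (c + u) \<partial>lborel)"
    by (subst nn_integral_distr) auto
  finally show ?thesis by (simp add: add.commute)
qed

lemma lat_unfold:
  fixes h :: "'a \<Rightarrow> ennreal"
  assumes h[measurable]: "h \<in> borel_measurable borel"
  shows "(\<integral>\<^sup>+u. indicator D u * (\<integral>\<^sup>+z. h (u + z) \<partial>count_space L) \<partial>lborel) = (\<integral>\<^sup>+x. h x \<partial>lborel)"
proof -
  note Dm[measurable] = D_meas
  have "(\<integral>\<^sup>+x. h x \<partial>lborel) = (\<integral>\<^sup>+x. (\<integral>\<^sup>+z. indicator D (x - z) * h x \<partial>count_space L) \<partial>lborel)"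
    by (rule nn_integral_cong) (simp add: nn_integral_multc ind_sum_one)
  also have "\<dots> = (\<integral>\<^sup>+z. (\<integral>\<^sup>+x. indicator D (x - z) * h x \<partial>lborel) \<partial>count_space L)"
    by (rule nn_integral_count_space_nn_integral[OF cL]) measurable
  also have "\<dots> = (\<integral>\<^sup>+z. (\<integral>\<^sup>+u. indicator D u * h (u + z) \<partial>lborel) \<partial>count_space L)"
  proof (rule nn_integral_cong)
    fix z assume "z \<in> space (count_space L)"
    show "(\<integral>\<^sup>+x. indicator D (x - z) * h x \<partial>lborel) = (\<integral>\<^sup>+u. indicator D u * h (u + z) \<partial>lborel)"
      by (subst shift_lborel[where c=z]) auto
  qed
  also have "\<dots> = (\<integral>\<^sup>+u. (\<integral>\<^sup>+z. indicator D u * h (u + z) \<partial>count_space L) \<partial>lborel)"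
    by (rule nn_integral_count_space_nn_integral[OF cL, symmetric]) measurable
  also have "\<dots> = (\<integral>\<^sup>+u. indicator D u * (\<integral>\<^sup>+z. h (u + z) \<partial>count_space L) \<partial>lborel)"
    by (rule nn_integral_cong) (simp add: nn_integral_cmult)
  finally show ?thesis ..
qed

lemma periodic:
  assumes "z0 \<in> L"
  shows "(\<integral>\<^sup>+z. f (u + z0 + z) \<partial>count_space L) = (\<integral>\<^sup>+z. f (u + z) \<partial>count_space L)"
proof -
  have b: "bij_betw (\<lambda>z. z0 + z) L L"
  proof (rule bij_betwI[where g="\<lambda>z. z - z0"])
    show "(+) z0 \<in> L \<rightarrow> L" using addL assms by auto
    show "(\<lambda>z. z - z0) \<in> L \<rightarrow> L"
    proof
      fix z assume "z \<in> L"
      then have "z + (- z0) \<in> L" using addL negL assms by blast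
      then show "z - z0 \<in> L" by simp
    qed
  qed auto
  show ?thesis
    using nn_integral_bij_count_space[OF b, of "\<lambda>z. f (u + z)"] by (simp add: add.assoc)
qed

lemma neg_reindex:
  "(\<integral>\<^sup>+z. f (- z) \<partial>count_space L) = (\<integral>\<^sup>+z. f z \<partial>count_space L)"
proof -
  have b: "bij_betw uminus L L"
    by (rule bij_betwI[where g=uminus]) (auto simp: negL)
  show ?thesis using nn_integral_bij_count_space[OF b, of f] by simp
qed

end

definition G :: "real \<Rightarrow> 'a::real_normed_vector \<Rightarrow> ennreal" where
  "G a v = ennreal (exp (- a * (norm v)\<^sup>2))"

lemma G_meas[measurable]: "G a \<in> borel_measurable borel"
  unfolding G_def[abs_def] by measurable

lemma G_minus: "G a (- v) = G a v"
  by (simp add: G_def)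

lemma G_conv:
  fixes y :: "'a::euclidean_space"
  assumes a: "a > 0" and b: "b > 0"
  shows "(\<integral>\<^sup>+w. G a (y - w) * G b w \<partial>lborel) = G (a * b / (a + b)) y * ennreal (sqrt (pi / (a + b)) ^ DIM('a))"
  unfolding G_def using gauss_conv[OF a b, of y] by simp

lemma G_int:
  assumes a: "a > 0"
  shows "(\<integral>\<^sup>+w. G a (w::'a::euclidean_space) \<partial>lborel) = ennreal (sqrt (pi / a) ^ DIM('a))"
  unfolding G_def using gauss_shift[OF a, of 0] by simp

lemma amgm_enn: "2 * (a * b) \<le> a\<^sup>2 + (b::ennreal)\<^sup>2"
proof (cases a; cases b)
  fix x y :: real assume ab: "a = ennreal x" "0 \<le> x" "b = ennreal y" "0 \<le> y"
  have "2 * (x * y) \<le> x\<^sup>2 + y\<^sup>2" using sum_squares_bound[of x y] by simp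
  then have "ennreal (2 * (x * y)) \<le> ennreal (x\<^sup>2 + y\<^sup>2)" by (rule ennreal_leI)
  then show ?thesis using ab by (simp add: ennreal_mult ennreal_power ennreal_plus[symmetric] del: ennreal_plus)
qed (auto simp: ennreal_mult_top ennreal_top_mult power2_eq_square)

context lat
begin

definition P :: "real \<Rightarrow> 'a \<Rightarrow> ennreal" where
  "P a w = (\<integral>\<^sup>+y. G a (y - w) \<partial>count_space L)"

definition Phi :: "real \<Rightarrow> 'a \<Rightarrow> ennreal" where
  "Phi a u = (\<integral>\<^sup>+z. G a (u + z) \<partial>count_space L)"

lemma Phi_meas[measurable]: "Phi a \<in> borel_measurable borel"
  unfolding Phi_def[abs_def] by (rule lsum_meas[OF cL]) measurable

lemma Phi_periodic: "z \<in> L \<Longrightarrow> Phi a (u + z) = Phi a u"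
  unfolding Phi_def using periodic[of z "G a" u] by simp

lemma S1:
  assumes a: "a > 0"
  shows "ennreal (sqrt (pi / (4 * a)) ^ DIM('a)) * P a w = (\<integral>\<^sup>+u. G (2 * a) u * Phi (2 * a) (u + w) \<partial>lborel)"
proof -
  define c0 where "c0 = ennreal (sqrt (pi / (4 * a)) ^ DIM('a))"
  have conv: "(\<integral>\<^sup>+u. G (2 * a) (v - u) * G (2 * a) u \<partial>lborel) = G a v * c0" for v :: 'a
  proof -
    have e1: "2 * a * (2 * a) / (2 * a + 2 * a) = a" using a by simp
    have e2: "pi / (2 * a + 2 * a) = pi / (4 * a)" by simp
    show ?thesis using G_conv[of "2 * a" "2 * a" v] a unfolding e1 e2 c0_def by simp
  qed
  have "c0 * P a w = (\<integral>\<^sup>+y. G a (y - w) * c0 \<partial>count_space L)"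
    unfolding P_def by (subst nn_integral_multc) (auto simp: mult.commute)
  also have "\<dots> = (\<integral>\<^sup>+y. (\<integral>\<^sup>+u. G (2 * a) (y - w - u) * G (2 * a) u \<partial>lborel) \<partial>count_space L)"
    by (simp add: conv)
  also have "\<dots> = (\<integral>\<^sup>+u. (\<integral>\<^sup>+y. G (2 * a) (y - w - u) * G (2 * a) u \<partial>count_space L) \<partial>lborel)"
    by (rule nn_integral_count_space_nn_integral[OF cL, symmetric]) measurable
  also have "\<dots> = (\<integral>\<^sup>+u. (\<integral>\<^sup>+y. G (2 * a) (y - w - u) \<partial>count_space L) * G (2 * a) u \<partial>lborel)"
    by (rule nn_integral_cong) (simp add: nn_integral_multc)
  also have "\<dots> = (\<integral>\<^sup>+u. G (2 * a) u * Phi (2 * a) (u + w) \<partial>lborel)"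
  proof (rule nn_integral_cong)
    fix u :: 'a
    have "(\<integral>\<^sup>+y. G (2 * a) (y - w - u) \<partial>count_space L) = (\<integral>\<^sup>+y. G (2 * a) (- y - w - u) \<partial>count_space L)"
      using neg_reindex[of "\<lambda>y. G (2 * a) (y - w - u)"] by simp
    also have "\<dots> = Phi (2 * a) (u + w)"
      unfolding Phi_def
    proof (rule nn_integral_cong)
      fix y
      have "- y - w - u = - (u + w + y)" by simp
      then show "G (2 * a) (- y - w - u) = G (2 * a) (u + w + y)" by (simp only: G_minus)
    qed
    finally show "(\<integral>\<^sup>+y. G (2 * a) (y - w - u) \<partial>count_space L) * G (2 * a) u = G (2 * a) u * Phi (2 * a) (u + w)"
      by (simp add: mult.commute)
  qed
  finally show ?thesis unfolding c0_def .
qed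

lemma S2:
  "(\<integral>\<^sup>+u. G b u * Phi b (u + w) \<partial>lborel) = (\<integral>\<^sup>+u. indicator D u * (Phi b u * Phi b (u + w)) \<partial>lborel)"
proof -
  have "(\<integral>\<^sup>+u. indicator D u * (\<integral>\<^sup>+z. G b (u + z) * Phi b (u + z + w) \<partial>count_space L) \<partial>lborel)
      = (\<integral>\<^sup>+u. G b u * Phi b (u + w) \<partial>lborel)"
    by (rule lat_unfold) measurable
  moreover have "(\<integral>\<^sup>+z. G b (u + z) * Phi b (u + z + w) \<partial>count_space L) = Phi b u * Phi b (u + w)" for u
  proof -
    have "(\<integral>\<^sup>+z. G b (u + z) * Phi b (u + z + w) \<partial>count_space L) = (\<integral>\<^sup>+z. G b (u + z) * Phi b (u + w) \<partial>count_space L)"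
    proof (rule nn_integral_cong)
      fix z assume "z \<in> space (count_space L)"
      then have "Phi b (u + w + z) = Phi b (u + w)" by (simp add: Phi_periodic)
      then show "G b (u + z) * Phi b (u + z + w) = G b (u + z) * Phi b (u + w)"
        by (simp add: ac_simps)
    qed
    also have "\<dots> = Phi b u * Phi b (u + w)"
      unfolding Phi_def by (simp add: nn_integral_multc)
    finally show ?thesis .
  qed
  ultimately show ?thesis by simp
qed

lemma S3:
  "(\<integral>\<^sup>+u. indicator D u * (Phi b (u + w) * Phi b (u + w)) \<partial>lborel) = (\<integral>\<^sup>+v. G b v * Phi b v \<partial>lborel)"
proof -
  have "(\<integral>\<^sup>+u. indicator D u * (\<integral>\<^sup>+z. G b (u + z + w) * Phi b (u + z + w) \<partial>count_space L) \<partial>lborel)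
      = (\<integral>\<^sup>+v. G b (v + w) * Phi b (v + w) \<partial>lborel)"
    by (rule lat_unfold) measurable
  moreover have "(\<integral>\<^sup>+z. G b (u + z + w) * Phi b (u + z + w) \<partial>count_space L) = Phi b (u + w) * Phi b (u + w)" for u
  proof -
    have "(\<integral>\<^sup>+z. G b (u + z + w) * Phi b (u + z + w) \<partial>count_space L) = (\<integral>\<^sup>+z. G b (u + w + z) * Phi b (u + w) \<partial>count_space L)"
    proof (rule nn_integral_cong)
      fix z assume "z \<in> space (count_space L)"
      then have "Phi b (u + w + z) = Phi b (u + w)" by (simp add: Phi_periodic)
      then show "G b (u + z + w) * Phi b (u + z + w) = G b (u + w + z) * Phi b (u + w)"
        by (simp add: ac_simps)
    qed
    also have "\<dots> = Phi b (u + w) * Phi b (u + w)"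
      unfolding Phi_def by (simp add: nn_integral_multc)
    finally show ?thesis .
  qed
  moreover have "(\<integral>\<^sup>+v. G b (v + w) * Phi b (v + w) \<partial>lborel) = (\<integral>\<^sup>+v. G b v * Phi b v \<partial>lborel)"
    by (rule shift_lborel[symmetric]) measurable
  ultimately show ?thesis by simp
qed

lemma P_le:
  assumes a: "a > 0"
  shows "P a w \<le> P a 0"
proof -
  define c0 where "c0 = ennreal (sqrt (pi / (4 * a)) ^ DIM('a))"
  define T where "T w = (\<integral>\<^sup>+u. indicator D u * (Phi (2 * a) u * Phi (2 * a) (u + w)) \<partial>lborel)" for w
  define X where "X = (\<integral>\<^sup>+v. G (2 * a) v * Phi (2 * a) v \<partial>lborel)"
  have T: "c0 * P a w = T w" for w
    unfolding c0_def T_def using S1[OF a, of w] S2[of "2 * a" w] by simp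
  have T0: "T 0 = X" unfolding T_def X_def using S3[of "2 * a" 0] by simp
  have "2 * T w = (\<integral>\<^sup>+u. indicator D u * (2 * (Phi (2 * a) u * Phi (2 * a) (u + w))) \<partial>lborel)"
  proof -
    note Dm[measurable] = D_meas
    have m: "(\<lambda>u. indicator D u * (Phi (2 * a) u * Phi (2 * a) (u + w))) \<in> borel_measurable lborel"
      by measurable
    show ?thesis unfolding T_def nn_integral_cmult[OF m, symmetric] by (simp add: ac_simps)
  qed
  also have "\<dots> \<le> (\<integral>\<^sup>+u. indicator D u * ((Phi (2 * a) u)\<^sup>2 + (Phi (2 * a) (u + w))\<^sup>2) \<partial>lborel)"
    by (intro nn_integral_mono mult_left_mono amgm_enn) simp
  also have "\<dots> = (\<integral>\<^sup>+u. indicator D u * (Phi (2 * a) (u + 0) * Phi (2 * a) (u + 0)) \<partial>lborel)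
                 + (\<integral>\<^sup>+u. indicator D u * (Phi (2 * a) (u + w) * Phi (2 * a) (u + w)) \<partial>lborel)"
  proof -
    note Dm[measurable] = D_meas
    show ?thesis by (subst nn_integral_add[symmetric]) (measurable, simp add: distrib_left power2_eq_square)
  qed
  also have "\<dots> = X + X" unfolding X_def by (simp only: S3)
  also have "\<dots> = 2 * X" by (simp add: mult_2)
  finally have "T w \<le> X"
    by (subst (asm) ennreal_mult_le_mult_iff) auto
  then have "c0 * P a w \<le> c0 * P a 0" using T T0 by simp
  moreover have "c0 \<noteq> 0" "c0 \<noteq> top" using a by (auto simp: c0_def)
  ultimately show ?thesis by (simp add: ennreal_mult_le_mult_iff)
qed

end

lemma sqrt_pow_powr: "x > 0 \<Longrightarrow> sqrt x ^ n = x powr (real n / 2)"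
  by (simp add: powr_half_sqrt[symmetric] powr_power)

context lat
begin

lemma theta_step:
  assumes t1: "0 < t1" and t12: "t1 < t2"
  shows "ennreal (sqrt (pi / (t2 + t1 * t2 / (t2 - t1))) ^ DIM('a)) * P t1 0
       \<le> ennreal (sqrt (pi / (t1 * t2 / (t2 - t1))) ^ DIM('a)) * P t2 0"
proof -
  define a where "a = t2"
  define b where "b = t1 * t2 / (t2 - t1)"
  have a: "a > 0" using t1 t12 by (simp add: a_def)
  have b: "b > 0" using t1 t12 by (simp add: b_def)
  have ab: "a * b / (a + b) = t1"
  proof -
    have ne: "t2 - t1 \<noteq> 0" using t12 by simp
    have "a + b = t2 * t2 / (t2 - t1)" using ne unfolding a_def b_def by (simp add: field_simps)
    then show ?thesis using ne t1 t12 unfolding a_def b_def by (simp add: field_simps)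
  qed
  define K1 where "K1 = ennreal (sqrt (pi / (a + b)) ^ DIM('a))"
  define K2 where "K2 = ennreal (sqrt (pi / b) ^ DIM('a))"
  have "K1 * P t1 0 = (\<integral>\<^sup>+y. G t1 y * K1 \<partial>count_space L)"
    unfolding P_def by (subst nn_integral_multc) (auto simp: mult.commute)
  also have "\<dots> = (\<integral>\<^sup>+y. (\<integral>\<^sup>+w. G a (y - w) * G b w \<partial>lborel) \<partial>count_space L)"
    by (simp add: G_conv[OF a b] ab K1_def)
  also have "\<dots> = (\<integral>\<^sup>+w. (\<integral>\<^sup>+y. G a (y - w) * G b w \<partial>count_space L) \<partial>lborel)"
    by (rule nn_integral_count_space_nn_integral[OF cL, symmetric]) measurable
  also have "\<dots> = (\<integral>\<^sup>+w. P a w * G b w \<partial>lborel)"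
    unfolding P_def by (rule nn_integral_cong) (simp add: nn_integral_multc)
  also have "\<dots> \<le> (\<integral>\<^sup>+w. P a 0 * G b (w::'a) \<partial>lborel)"
    proof (rule nn_integral_mono)
    fix w :: 'a
    have "P a w \<le> P a 0" by (rule P_le[OF a])
    then show "P a w * G b w \<le> P a 0 * G b w" by (rule mult_right_mono) simp
  qed
  also have "\<dots> = P a 0 * K2"
    by (simp add: nn_integral_cmult G_int[OF b] K2_def)
  finally show ?thesis unfolding K1_def K2_def a_def b_def by (simp add: mult.commute)
qed

lemma theta_mono:
  assumes t1: "0 < t1" and t12: "t1 \<le> t2"
  shows "ennreal (t1 powr (real DIM('a) / 2)) * P t1 0 \<le> ennreal (t2 powr (real DIM('a) / 2)) * P t2 0"
proof (cases "t1 = t2")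
  case True then show ?thesis by simp
next
  case False
  then have lt: "t1 < t2" using t12 by simp
  define N where "N = real DIM('a) / 2"
  define a where "a = t2"
  define b where "b = t1 * t2 / (t2 - t1)"
  have a: "a > 0" using t1 lt by (simp add: a_def)
  have b: "b > 0" using t1 lt by (simp add: b_def)
  have ab: "t2 * b / (a + b) = t1"
  proof -
    have ne: "t2 - t1 \<noteq> 0" using lt by simp
    have "a + b = t2 * t2 / (t2 - t1)" using ne unfolding a_def b_def by (simp add: field_simps)
    then show ?thesis using ne t1 lt unfolding a_def b_def by (simp add: field_simps)
  qed
  have st: "ennreal ((pi / (a + b)) powr N) * P t1 0 \<le> ennreal ((pi / b) powr N) * P t2 0"
  proof -
    have "ennreal (sqrt (pi / (a + b)) ^ DIM('a)) * P t1 0 \<le> ennreal (sqrt (pi / b) ^ DIM('a)) * P t2 0"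
      using theta_step[OF t1 lt] unfolding a_def b_def .
    moreover have "pi / (a + b) > 0" "pi / b > 0" using a b by simp_all
    ultimately show ?thesis unfolding N_def by (simp add: sqrt_pow_powr)
  qed
  define F where "F = (t2 * b / pi) powr N"
  have F1: "F * (pi / (a + b)) powr N = t1 powr N"
    unfolding F_def powr_mult[symmetric] using ab by simp
  have F2: "F * (pi / b) powr N = t2 powr N"
    unfolding F_def powr_mult[symmetric] using b by simp
  have "ennreal F * (ennreal ((pi / (a + b)) powr N) * P t1 0) \<le> ennreal F * (ennreal ((pi / b) powr N) * P t2 0)"
    by (rule mult_left_mono[OF st]) simp
  then show ?thesis
    using F1 F2 unfolding N_def[symmetric]
    by (simp add: mult.assoc[symmetric] ennreal_mult[symmetric] F_def)
qed

end

lemma mellin: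
  fixes lam s :: real
  assumes lam: "lam > 0" and s: "s > 0"
  shows "(\<integral>\<^sup>+t. ennreal (indicator {0..} t * t powr (s - 1) * exp (- t * lam)) \<partial>lborel)
       = ennreal (Gamma s / lam powr s)"
proof -
  define I where "I = (\<integral>\<^sup>+t. ennreal (indicator {0..} t * t powr (s - 1) * exp (- t * lam)) \<partial>lborel)"
  have "ennreal (Gamma s) = (\<integral>\<^sup>+t. ennreal (indicator {0..} t * t powr (s - 1) / exp t) \<partial>lborel)"
    by (rule Gamma_conv_nn_integral_real[OF s])
  also have "\<dots> = (\<integral>\<^sup>+t. ennreal (indicator {0..} t * t powr (s - 1) / exp t)
        \<partial>density (distr lborel borel (\<lambda>x. 0 + lam * x)) (\<lambda>_. ennreal (abs lam)))"
    using lborel_real_affine[of lam 0] lam by simp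
  also have "\<dots> = (\<integral>\<^sup>+x. ennreal (abs lam) * ennreal (indicator {0..} (lam * x) * (lam * x) powr (s - 1) / exp (lam * x)) \<partial>lborel)"
    by (subst nn_integral_density) (auto simp: nn_integral_distr)
  also have "\<dots> = (\<integral>\<^sup>+x. ennreal (lam powr s) * ennreal (indicator {0..} x * x powr (s - 1) * exp (- x * lam)) \<partial>lborel)"
  proof (rule nn_integral_cong)
    fix x :: real
    have i: "indicator {0..} (lam * x) = (indicator {0..} x :: real)"
      using lam by (auto simp: indicator_def zero_le_mult_iff)
    show "ennreal (abs lam) * ennreal (indicator {0..} (lam * x) * (lam * x) powr (s - 1) / exp (lam * x))
        = ennreal (lam powr s) * ennreal (indicator {0..} x * x powr (s - 1) * exp (- x * lam))"
    proof (cases "x \<ge> 0")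
      case True
      have "abs lam * (indicator {0..} (lam * x) * (lam * x) powr (s - 1) / exp (lam * x))
          = lam powr s * (indicator {0..} x * x powr (s - 1) * exp (- x * lam))"
        using lam True
        by (simp add: i powr_mult exp_minus field_simps powr_diff)
      then show ?thesis using lam by (simp add: ennreal_mult[symmetric])
    next
      case False
      then show ?thesis using lam by (simp add: i indicator_def zero_le_mult_iff)
    qed
  qed
  also have "\<dots> = ennreal (lam powr s) * I"
    unfolding I_def by (rule nn_integral_cmult) simp
  finally have eq0: "ennreal (Gamma s) = ennreal (lam powr s) * I" .
  have "ennreal (lam powr s) * ennreal (Gamma s / lam powr s) = ennreal (lam powr s * (Gamma s / lam powr s))"
    using lam s by (subst ennreal_mult) (auto intro: less_imp_le)
  also have "\<dots> = ennreal (Gamma s)" using lam by simp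
  finally have eq: "ennreal (lam powr s) * I = ennreal (lam powr s) * ennreal (Gamma s / lam powr s)"
    using eq0 by simp
  have "ennreal (lam powr s) \<noteq> 0" "ennreal (lam powr s) \<noteq> top" using lam by auto
  then show ?thesis using eq unfolding I_def[symmetric]
    by (metis ennreal_mult_le_mult_iff order_antisym order_refl)
qed

lemma key_enn:
  fixes M M0 :: ennreal and \<alpha> \<beta> :: real
  assumes "\<alpha> > 0" "\<beta> > 0"
    and h1: "\<beta> \<le> \<alpha> \<Longrightarrow> M0 \<le> M" and h2: "\<alpha> \<le> \<beta> \<Longrightarrow> M \<le> M0"
  shows "ennreal \<beta> * M + ennreal \<alpha> * M0 \<le> ennreal \<alpha> * M + ennreal \<beta> * M0"
proof (cases "M = top \<or> M0 = top")
  case True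
  then show ?thesis using assms by (auto simp: ennreal_mult_top)
next
  case False
  then obtain m m0 where m: "M = ennreal m" "0 \<le> m" and m0: "M0 = ennreal m0" "0 \<le> m0"
    by (metis ennreal_cases top.not_eq_extremum)
  have "\<beta> * m + \<alpha> * m0 \<le> \<alpha> * m + \<beta> * m0"
  proof (cases "\<beta> \<le> \<alpha>")
    case True
    then have "m0 \<le> m" using h1 m m0 by (simp add: ennreal_le_iff)
    then have "0 \<le> (\<alpha> - \<beta>) * (m - m0)" using True by simp
    then show ?thesis by (simp add: algebra_simps)
  next
    case False
    then have "m \<le> m0" using h2 m m0 by (simp add: ennreal_le_iff)
    then have "0 \<le> (\<beta> - \<alpha>) * (m0 - m)" using False by simp
    then show ?thesis by (simp add: algebra_simps)
  qed
  then have "ennreal (\<beta> * m + \<alpha> * m0) \<le> ennreal (\<alpha> * m + \<beta> * m0)" by (rule ennreal_leI)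
  then show ?thesis using m m0 assms
    by (simp add: ennreal_mult[symmetric] ennreal_plus[symmetric] del: ennreal_plus)
qed

context lat
begin

definition Z :: "real \<Rightarrow> real \<Rightarrow> ennreal" where
  "Z q s = (\<integral>\<^sup>+y. ennreal (((norm y)\<^sup>2 + q) powr (- s)) \<partial>count_space L)"

lemma I_eq:
  assumes q: "q > 0" and s: "s > 0"
  shows "(\<integral>\<^sup>+t. ennreal (indicator {0..} t * t powr (s - 1) * exp (- t * q)) * P t 0 \<partial>lborel)
       = ennreal (Gamma s) * Z q s"
proof -
  have "(\<integral>\<^sup>+t. ennreal (indicator {0..} t * t powr (s - 1) * exp (- t * q)) * P t 0 \<partial>lborel)
      = (\<integral>\<^sup>+t. (\<integral>\<^sup>+y. ennreal (indicator {0..} t * t powr (s - 1) * exp (- t * ((norm y)\<^sup>2 + q))) \<partial>count_space L) \<partial>lborel)"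
  proof (rule nn_integral_cong)
    fix t :: real
    have "ennreal (indicator {0..} t * t powr (s - 1) * exp (- t * q)) * P t 0
        = (\<integral>\<^sup>+y. ennreal (indicator {0..} t * t powr (s - 1) * exp (- t * q)) * G t y \<partial>count_space L)"
      unfolding P_def by (subst nn_integral_cmult) auto
    also have "\<dots> = (\<integral>\<^sup>+y. ennreal (indicator {0..} t * t powr (s - 1) * exp (- t * ((norm y)\<^sup>2 + q))) \<partial>count_space L)"
    proof (rule nn_integral_cong)
      fix y :: 'a
      have "indicator {0..} t * t powr (s - 1) * exp (- t * q) * exp (- t * (norm y)\<^sup>2)
          = indicator {0..} t * t powr (s - 1) * exp (- t * ((norm y)\<^sup>2 + q))"
        by (simp add: exp_add[symmetric] algebra_simps)
      then show "ennreal (indicator {0..} t * t powr (s - 1) * exp (- t * q)) * G t y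
          = ennreal (indicator {0..} t * t powr (s - 1) * exp (- t * ((norm y)\<^sup>2 + q)))"
        unfolding G_def by (simp add: ennreal_mult[symmetric] indicator_def)
    qed
    finally show "ennreal (indicator {0..} t * t powr (s - 1) * exp (- t * q)) * P t 0
        = (\<integral>\<^sup>+y. ennreal (indicator {0..} t * t powr (s - 1) * exp (- t * ((norm y)\<^sup>2 + q))) \<partial>count_space L)" .
  qed
  also have "\<dots> = (\<integral>\<^sup>+y. (\<integral>\<^sup>+t. ennreal (indicator {0..} t * t powr (s - 1) * exp (- t * ((norm y)\<^sup>2 + q))) \<partial>lborel) \<partial>count_space L)"
    by (rule nn_integral_count_space_nn_integral[OF cL]) measurable
  also have "\<dots> = (\<integral>\<^sup>+y. ennreal (Gamma s) * ennreal (((norm y)\<^sup>2 + q) powr (- s)) \<partial>count_space L)"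
  proof (rule nn_integral_cong)
    fix y :: 'a
    have lam: "(norm y)\<^sup>2 + q > 0" using q by (simp add: add_nonneg_pos)
    have "Gamma s / ((norm y)\<^sup>2 + q) powr s = Gamma s * ((norm y)\<^sup>2 + q) powr (- s)"
      using lam by (simp add: powr_minus divide_inverse)
    then show "(\<integral>\<^sup>+t. ennreal (indicator {0..} t * t powr (s - 1) * exp (- t * ((norm y)\<^sup>2 + q))) \<partial>lborel)
        = ennreal (Gamma s) * ennreal (((norm y)\<^sup>2 + q) powr (- s))"
      using mellin[OF lam s] s by (simp add: ennreal_mult[symmetric] less_imp_le)
  qed
  also have "\<dots> = ennreal (Gamma s) * Z q s"
    unfolding Z_def by (rule nn_integral_cmult) simp
  finally show ?thesis .
qed

end

context lat
begin

lemma main_enn: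
  assumes q: "q > 0" and s: "s > real DIM('a) / 2"
  shows "ennreal (s - real DIM('a) / 2) * Z q s \<le> ennreal (q * s) * Z q (s + 1)"
proof -
  define h where "h = real DIM('a) / 2"
  define a where "a = s - h"
  have a: "a > 0" using s by (simp add: a_def h_def)
  have h0: "h \<ge> 0" by (simp add: h_def)
  have s0: "s > 0" using a h0 by (simp add: a_def)
  define t0 where "t0 = a / q"
  have t0: "t0 > 0" using a q by (simp add: t0_def)
  define M where "M t = ennreal (t powr h) * P t 0" for t
  define E where "E t = indicator {0..} t * t powr (a - 1) * exp (- t * q)" for t :: real
  define f1 where "f1 t = ennreal (indicator {0..} t * t powr (s + 1 - 1) * exp (- t * q)) * P t 0" for t
  define f0 where "f0 t = ennreal (indicator {0..} t * t powr (s - 1) * exp (- t * q)) * P t 0" for t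
  define g0 where "g0 t = ennreal (indicator {0..} t * t powr (a - 1) * exp (- t * q))" for t :: real
  define g1 where "g1 t = ennreal (indicator {0..} t * t powr (a + 1 - 1) * exp (- t * q))" for t :: real
  define I1 where "I1 = (\<integral>\<^sup>+t. f1 t \<partial>lborel)"
  define I0 where "I0 = (\<integral>\<^sup>+t. f0 t \<partial>lborel)"
  define J0 where "J0 = (\<integral>\<^sup>+t. g0 t \<partial>lborel)"
  define J1 where "J1 = (\<integral>\<^sup>+t. g1 t \<partial>lborel)"
  have I1: "I1 = ennreal (Gamma (s + 1)) * Z q (s + 1)"
    unfolding I1_def f1_def using I_eq[OF q, of "s + 1"] s0 by simp
  have I0: "I0 = ennreal (Gamma s) * Z q s"
    unfolding I0_def f0_def using I_eq[OF q s0] by simp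
  have J0: "J0 = ennreal (Gamma a / q powr a)"
    unfolding J0_def g0_def using mellin[OF q a] by simp
  have J1: "J1 = ennreal (Gamma (a + 1) / q powr (a + 1))"
    unfolding J1_def g1_def using mellin[OF q, of "a + 1"] a by simp
  have qJ: "ennreal q * J1 = ennreal a * J0"
  proof -
    have ga: "Gamma (a + 1) = a * Gamma a"
      using a by (intro Gamma_plus1) (auto elim!: nonpos_Ints_cases)
    have "q * (Gamma (a + 1) / q powr (a + 1)) = a * (Gamma a / q powr a)"
      using q a unfolding ga by (simp add: powr_add field_simps)
    then show ?thesis unfolding J0 J1 using q a
      by (simp add: ennreal_mult[symmetric] less_imp_le)
  qed
  have pw: "ennreal a * f0 t + ennreal q * (M t0 * g1 t) \<le> ennreal q * f1 t + ennreal a * (M t0 * g0 t)" for t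
  proof (cases "t > 0")
    case False
    then have "t \<le> 0" by simp
    then have "f0 t = 0" "f1 t = 0" "g0 t = 0" "g1 t = 0"
      unfolding f0_def f1_def g0_def g1_def by (auto simp: indicator_def)
    then show ?thesis by simp
  next
    case True
    define e where "e = t powr (a - 1) * exp (- t * q)"
    have e: "e > 0" using True by (simp add: e_def)
    have f1e: "f1 t = ennreal (e * t) * M t"
    proof -
      have e1: "t powr a = t powr (a - 1) * t" using True powr_add[of t "a - 1" 1] by simp
      have "t powr (s + 1 - 1) = t powr a * t powr h" using powr_add[of t a h] by (simp add: a_def)
      then have "indicator {0..} t * t powr (s + 1 - 1) * exp (- t * q) = (e * t) * t powr h"
        using e1 True by (simp add: e_def)
      then have "f1 t = ennreal ((e * t) * t powr h) * P t 0" unfolding f1_def by simp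
      also have "\<dots> = ennreal (e * t) * M t"
        unfolding M_def using e True by (simp add: ennreal_mult mult.assoc)
      finally show ?thesis .
    qed
    have f0e: "f0 t = ennreal e * M t"
    proof -
      have "t powr (s - 1) = t powr (a - 1) * t powr h" using powr_add[of t "a - 1" h] by (simp add: a_def)
      then have "indicator {0..} t * t powr (s - 1) * exp (- t * q) = e * t powr h"
        using True by (simp add: e_def)
      then have "f0 t = ennreal (e * t powr h) * P t 0" unfolding f0_def by simp
      also have "\<dots> = ennreal e * M t"
        unfolding M_def using e True by (simp add: ennreal_mult mult.assoc)
      finally show ?thesis .
    qed
    have g0e: "g0 t = ennreal e" unfolding g0_def e_def using True by simp
    have g1e: "g1 t = ennreal (e * t)"
    proof -
      have "t powr a = t powr (a - 1) * t" using True powr_add[of t "a - 1" 1] by simp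
      then show ?thesis unfolding g1_def e_def using True by (simp add: mult_ac)
    qed
    have key: "ennreal a * M t + ennreal (q * t) * M t0 \<le> ennreal (q * t) * M t + ennreal a * M t0"
    proof (rule key_enn)
      show "q * t > 0" "a > 0" using q True a by simp_all
      show "M t0 \<le> M t" if "a \<le> q * t"
      proof -
        have "t0 \<le> t" using that q unfolding t0_def by (simp add: divide_le_eq mult.commute)
        then show ?thesis unfolding M_def h_def by (rule theta_mono[OF t0])
      qed
      show "M t \<le> M t0" if "q * t \<le> a"
      proof -
        have "t \<le> t0" using that q unfolding t0_def by (simp add: le_divide_eq mult.commute)
        then show ?thesis unfolding M_def h_def by (rule theta_mono[OF True])
      qed
    qed
    have "ennreal a * f0 t + ennreal q * (M t0 * g1 t) = ennreal e * (ennreal a * M t + ennreal (q * t) * M t0)"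
      unfolding f0e g1e using e True q by (simp add: ennreal_mult distrib_left mult_ac)
    also have "\<dots> \<le> ennreal e * (ennreal (q * t) * M t + ennreal a * M t0)"
      by (rule mult_left_mono[OF key]) simp
    also have "\<dots> = ennreal q * f1 t + ennreal a * (M t0 * g0 t)"
      unfolding f1e g0e using e True q by (simp add: ennreal_mult distrib_left mult_ac)
    finally show ?thesis .
  qed
  have P0m[measurable]: "(\<lambda>t. P t 0) \<in> borel_measurable lborel"
    unfolding P_def G_def by (rule lsum_meas[OF cL]) measurable
  have "ennreal a * I0 + ennreal q * (M t0 * J1) = (\<integral>\<^sup>+t. ennreal a * f0 t + ennreal q * (M t0 * g1 t) \<partial>lborel)"
    unfolding I0_def J1_def f0_def g1_def
    by (simp add: nn_integral_add nn_integral_cmult)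
  also have "\<dots> \<le> (\<integral>\<^sup>+t. ennreal q * f1 t + ennreal a * (M t0 * g0 t) \<partial>lborel)"
    by (rule nn_integral_mono) (rule pw)
  also have "\<dots> = ennreal q * I1 + ennreal a * (M t0 * J0)"
    unfolding I1_def J0_def f1_def g0_def
    by (simp add: nn_integral_add nn_integral_cmult)
  finally have ineq: "ennreal a * I0 + ennreal a * (M t0 * J0) \<le> ennreal q * I1 + ennreal a * (M t0 * J0)"
    using qJ by (metis mult.left_commute)
  have main: "ennreal a * I0 \<le> ennreal q * I1"
  proof (cases "M t0 = top")
    case False
    have J0fin: "J0 \<noteq> top" unfolding J0 by simp
    have "ennreal a * (M t0 * J0) \<noteq> top"
      using False J0fin by (simp add: ennreal_mult_eq_top_iff)
    then show ?thesis using ineq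
      by (metis add.commute ennreal_add_left_cancel_le infinity_ennreal_def)
  next
    case True
    have "I1 = top"
    proof -
      have "(\<integral>\<^sup>+t. top * indicator {t0..t0+1} t \<partial>lborel) \<le> I1"
        unfolding I1_def
      proof (rule nn_integral_mono)
        fix t :: real
        show "top * indicator {t0..t0+1} t \<le> f1 t"
        proof (cases "t \<in> {t0..t0+1}")
          case False then show ?thesis by simp
        next
          case tin: True
          then have tpos: "t > 0" using t0 by auto
          have "M t0 \<le> M t" unfolding M_def h_def by (rule theta_mono[OF t0]) (use tin in auto)
          then have "M t = top" using True by (simp add: top_unique)
          then have "P t 0 = top" unfolding M_def by (simp add: ennreal_mult_eq_top_iff)
          moreover have "indicator {0..} t * t powr (s + 1 - 1) * exp (- t * q) > 0" using tpos by simp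
          ultimately have "f1 t = top" unfolding f1_def using tpos by (simp add: ennreal_mult_top indicator_def)
          then show ?thesis by simp
        qed
      qed
      moreover have "(\<integral>\<^sup>+t. top * indicator {t0..t0+1} t \<partial>lborel) = top"
        by (subst nn_integral_cmult_indicator) (auto simp: ennreal_top_mult)
      ultimately show ?thesis by (simp add: top_unique)
    qed
    then show ?thesis using q by (simp add: ennreal_mult_top)
  qed
  have "ennreal (Gamma s) * (ennreal a * Z q s) \<le> ennreal (Gamma s) * (ennreal (q * s) * Z q (s + 1))"
  proof -
    have ga: "Gamma (s + 1) = s * Gamma s"
      using s0 by (intro Gamma_plus1) (auto elim!: nonpos_Ints_cases)
    have "ennreal q * I1 = ennreal (Gamma s) * (ennreal (q * s) * Z q (s + 1))"
      unfolding I1 ga using q s0 by (simp add: ennreal_mult mult_ac less_imp_le)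
    moreover have "ennreal a * I0 = ennreal (Gamma s) * (ennreal a * Z q s)"
      unfolding I0 by (simp add: mult_ac)
    ultimately show ?thesis using main by simp
  qed
  moreover have "ennreal (Gamma s) \<noteq> 0" "ennreal (Gamma s) \<noteq> top"
    using Gamma_real_pos[OF s0] by auto
  ultimately have "ennreal a * Z q s \<le> ennreal (q * s) * Z q (s + 1)"
    by (simp add: ennreal_mult_le_mult_iff)
  then show ?thesis unfolding a_def h_def .
qed

end

lemma lattice_lat:
  fixes B :: "real^'n^'n"
  assumes "invertible B"
  shows "\<exists>D. lat (lattice_of B) D"
proof -
  obtain B' :: "real^'n^'n" where BB': "B ** B' = mat 1" "B' ** B = mat 1"
    using assms unfolding invertible_def by blast
  define iv :: "int^'n \<Rightarrow> real^'n" where "iv k = (\<chi> i. of_int (k $ i))" for k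
  have L: "lattice_of B = (\<lambda>k. B *v iv k) ` UNIV"
    unfolding lattice_of_def iv_def by auto
  define D where "D = {x. \<forall>i. 0 \<le> (B' *v x) $ i \<and> (B' *v x) $ i < 1}"
  have inv1: "B' *v (B *v v) = v" for v
    using BB' by (simp add: matrix_vector_mul_assoc)
  have inv2: "B *v (B' *v v) = v" for v
    using BB' by (simp add: matrix_vector_mul_assoc)
  have "lat (lattice_of B) D"
  proof
    show "countable (lattice_of B)" unfolding L by simp
    show "y + z \<in> lattice_of B" if "y \<in> lattice_of B" "z \<in> lattice_of B" for y z
    proof -
      have "y \<in> range (\<lambda>k. B *v iv k)" "z \<in> range (\<lambda>k. B *v iv k)" using that L by simp_all
      then obtain k1 k2 where k1: "y = B *v iv k1" and k2: "z = B *v iv k2" by blast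
      have "iv (k1 + k2) = iv k1 + iv k2" by (simp add: iv_def vec_eq_iff)
      with k1 k2 have "y + z = B *v iv (k1 + k2)"
        by (simp add: matrix_vector_right_distrib)
      then show ?thesis unfolding L by auto
    qed
    show "- y \<in> lattice_of B" if "y \<in> lattice_of B" for y
    proof -
      have "y \<in> range (\<lambda>k. B *v iv k)" using that L by simp
      then obtain k where "y = B *v iv k" by blast
      moreover have "iv (- k) = 0 - iv k" by (simp add: iv_def vec_eq_iff)
      ultimately have "- y = B *v iv (- k)"
        using matrix_vector_mult_diff_distrib[of B 0 "iv k"] by simp
      then show ?thesis unfolding L by auto
    qed
    have meas[measurable]: "(\<lambda>x::real^'n. (B' *v x) $ i) \<in> borel_measurable borel" for i
    proof -
      have "bounded_linear (\<lambda>x::real^'n. (B' *v x) $ i)"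
        using bounded_linear_compose[OF bounded_linear_vec_nth matrix_vector_mul_bounded_linear[of B']]
        by (simp add: o_def)
      then have "continuous_on UNIV (\<lambda>x::real^'n. (B' *v x) $ i)"
        by (rule linear_continuous_on)
      then show ?thesis by (rule borel_measurable_continuous_onI)
    qed
    show "D \<in> sets borel"
      unfolding D_def by measurable
    show "\<exists>!z. z \<in> lattice_of B \<and> x - z \<in> D" for x
    proof -
      define v where "v = B' *v x"
      define k :: "int^'n" where "k = (\<chi> i. floor (v $ i))"
      have Bd: "B' *v (x - B *v iv k') = v - iv k'" for k'
        unfolding v_def by (simp add: matrix_vector_mult_diff_distrib inv1)
      have memD: "x - B *v iv k' \<in> D \<longleftrightarrow> (\<forall>i. 0 \<le> v $ i - of_int (k' $ i) \<and> v $ i - of_int (k' $ i) < 1)" for k'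
      proof -
        have "x - B *v iv k' \<in> D \<longleftrightarrow> (\<forall>i. 0 \<le> (v - iv k') $ i \<and> (v - iv k') $ i < 1)"
          unfolding D_def Bd[symmetric] by simp
        then show ?thesis by (simp add: iv_def)
      qed
      have inL: "B *v iv k' \<in> lattice_of B" for k' using L by simp
      have ex: "B *v iv k \<in> lattice_of B \<and> x - B *v iv k \<in> D"
        unfolding memD using inL by (auto simp: k_def) linarith
      have un: "z = B *v iv k" if "z \<in> lattice_of B" "x - z \<in> D" for z
      proof -
        have "z \<in> range (\<lambda>k. B *v iv k)" using that L by simp
        then obtain k' where z: "z = B *v iv k'" by blast
        have "k' = k"
        proof (subst vec_eq_iff, rule allI)
          fix i
          have "0 \<le> v $ i - of_int (k' $ i)" "v $ i - of_int (k' $ i) < 1"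
            using that(2) unfolding z memD by auto
          then have "floor (v $ i) = k' $ i" by (intro floor_unique) auto
          then show "k' $ i = k $ i" by (simp add: k_def)
        qed
        then show ?thesis using z by simp
      qed
      show ?thesis using ex un by blast
    qed
  qed
  then show ?thesis by blast
qed

lemma infsum_enn_fin:
  fixes f :: "'b \<Rightarrow> real"
  assumes nn: "\<And>x. x \<in> A \<Longrightarrow> f x \<ge> 0"
    and fin: "(\<integral>\<^sup>+x. ennreal (f x) \<partial>count_space A) < \<infinity>"
  shows "infsum f A = enn2real (\<integral>\<^sup>+x. ennreal (f x) \<partial>count_space A)"
proof -
  have "(\<integral>\<^sup>+x. ennreal (norm (f x)) \<partial>count_space A) = (\<integral>\<^sup>+x. ennreal (f x) \<partial>count_space A)"
    by (rule nn_integral_cong) (simp add: nn)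
  then have "integrable (count_space A) f"
    using fin by (simp add: integrable_iff_bounded)
  then have abs: "Infinite_Set_Sum.abs_summable_on f A" by (simp add: Infinite_Set_Sum.abs_summable_on_def)
  have "infsum f A = infsetsum f A" by (rule infsetsum_infsum[OF abs, symmetric])
  also have "\<dots> = enn2real (\<integral>\<^sup>+x. ennreal (f x) \<partial>count_space A)"
    using fin nn by (intro infsetsum_conv_nn_integral) auto
  finally show ?thesis .
qed

lemma infsum_enn_inf:
  fixes f :: "'b \<Rightarrow> real"
  assumes nn: "\<And>x. x \<in> A \<Longrightarrow> f x \<ge> 0"
    and inf: "(\<integral>\<^sup>+x. ennreal (f x) \<partial>count_space A) = \<infinity>"
  shows "infsum f A = 0"
proof (rule infsum_not_exists, rule notI)
  assume "f summable_on A"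
  then have "Infinite_Sum.abs_summable_on f A" using summable_on_iff_abs_summable_on_real by blast
  then have "Infinite_Set_Sum.abs_summable_on f A" using abs_summable_equivalent by blast
  then have "(\<integral>\<^sup>+x. ennreal (f x) \<partial>count_space A) = ennreal (infsetsum f A)"
    using nn by (rule nn_integral_conv_infsetsum)
  then show False using inf by simp
qed

theorem corollary3p2:
  fixes L :: "(real^'n) set" and s q :: real
  assumes "full_rank_lattice L"
    and "s > real CARD('n) / 2"
    and "q > 0"
  shows "lattice_zeta L (s + 1) q \<ge> (s - real CARD('n) / 2) / (q * s) * lattice_zeta L s q"
proof -
  have q: "q > 0" and s: "s > real CARD('n) / 2" using assms by auto
  obtain B where B: "invertible B" "L = lattice_of B"
    using assms(1) unfolding full_rank_lattice_def by blast
  obtain D where "lat L D" using lattice_lat[OF B(1)] B(2) by blast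
  then interpret lat L D .
  define a where "a = s - real CARD('n) / 2"
  have a: "a > 0" using s by (simp add: a_def)
  have "real CARD('n) / 2 \<ge> 0" by simp
  then have s0: "s > 0" using s by linarith
  have me: "ennreal a * Z q s \<le> ennreal (q * s) * Z q (s + 1)"
    using main_enn[OF q] s unfolding a_def by simp
  have nn: "\<And>y. ((norm y)\<^sup>2 + q) powr (- \<sigma>) \<ge> 0" for \<sigma> by simp
  have zeta: "lattice_zeta L \<sigma> q = infsum (\<lambda>y. ((norm y)\<^sup>2 + q) powr (- \<sigma>)) L" for \<sigma>
    unfolding lattice_zeta_def ..
  show ?thesis
  proof (cases "Z q s = \<infinity>")
    case True
    then have "lattice_zeta L s q = 0"
      unfolding zeta by (intro infsum_enn_inf) (auto simp: Z_def)
    moreover have "lattice_zeta L (s + 1) q \<ge> 0"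
      unfolding zeta by (intro infsum_nonneg) simp
    ultimately show ?thesis by simp
  next
    case False
    then have Zs: "Z q s < \<infinity>" by (simp add: less_top)
    have "Z q (s + 1) \<le> (\<integral>\<^sup>+y. ennreal (1 / q) * ennreal (((norm y)\<^sup>2 + q) powr (- s)) \<partial>count_space L)"
      unfolding Z_def
    proof (rule nn_integral_mono)
      fix y :: "real^'n"
      have pos: "(norm y)\<^sup>2 + q > 0" using q by (simp add: add_nonneg_pos)
      have "((norm y)\<^sup>2 + q) powr (- (s + 1)) = ((norm y)\<^sup>2 + q) powr (- s) * (1 / ((norm y)\<^sup>2 + q))"
      proof -
        define X where "X = (norm y)\<^sup>2 + q"
        have posX: "X > 0" using pos by (simp add: X_def)
        have e: "- (s + 1) = - s + - 1" by simp
        have "X powr (- s + - 1) = X powr (- s) * X powr (- 1)" by (rule powr_add)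
        moreover have "X powr (- 1) = 1 / X" using posX by (simp add: powr_minus divide_inverse)
        ultimately show ?thesis unfolding e X_def[symmetric] by simp
      qed
      also have "\<dots> \<le> ((norm y)\<^sup>2 + q) powr (- s) * (1 / q)"
        using pos q by (intro mult_left_mono) (auto simp: frac_le)
      finally show "ennreal (((norm y)\<^sup>2 + q) powr (- (s + 1))) \<le> ennreal (1 / q) * ennreal (((norm y)\<^sup>2 + q) powr (- s))"
        using q by (simp add: ennreal_mult[symmetric] mult.commute ennreal_leI)
    qed
    also have "\<dots> = ennreal (1 / q) * Z q s"
      unfolding Z_def by (rule nn_integral_cmult) simp
    finally have Zs1: "Z q (s + 1) < \<infinity>" using Zs
      by (simp add: ennreal_mult_less_top le_less_trans)
    have Zs': "(\<integral>\<^sup>+y. ennreal (((norm y)\<^sup>2 + q) powr (- s)) \<partial>count_space L) < \<infinity>"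
      using Zs unfolding Z_def .
    have Zs1': "(\<integral>\<^sup>+y. ennreal (((norm y)\<^sup>2 + q) powr (- (s + 1))) \<partial>count_space L) < \<infinity>"
      using Zs1 unfolding Z_def .
    have z0: "lattice_zeta L s q = enn2real (Z q s)"
      unfolding zeta Z_def by (rule infsum_enn_fin[OF _ Zs']) simp
    have z1: "lattice_zeta L (s + 1) q = enn2real (Z q (s + 1))"
      unfolding zeta Z_def by (rule infsum_enn_fin[OF _ Zs1']) simp
    have "ennreal (q * s) * Z q (s + 1) < \<infinity>"
      using Zs1 by (simp add: ennreal_mult_less_top)
    then have "enn2real (ennreal a * Z q s) \<le> enn2real (ennreal (q * s) * Z q (s + 1))"
      using me by (intro enn2real_mono) (simp_all add: less_top)
    moreover have "enn2real (ennreal a * Z q s) = a * enn2real (Z q s)"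
      using a by (simp add: enn2real_mult)
    moreover have "enn2real (ennreal (q * s) * Z q (s + 1)) = (q * s) * enn2real (Z q (s + 1))"
      using q s0 by (simp add: enn2real_mult)
    ultimately have "a * lattice_zeta L s q \<le> (q * s) * lattice_zeta L (s + 1) q"
      unfolding z0 z1 by simp
    moreover have qs: "q * s > 0" using q s0 by simp
    ultimately have "a / (q * s) * lattice_zeta L s q \<le> lattice_zeta L (s + 1) q"
      by (simp add: divide_le_eq mult.commute)
    then show ?thesis unfolding a_def .
  qed
qed

end
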